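(* For every $R>1$ there exists $a^+=a^+(R)>0$ such that for every $0<l\le+\infty$ and every annulus $A\subset Z(0,l)$ of conformal radius $R$ adjacent to the boundary circle $\partial_0Z=S^1\times\{0\}$, one has $Z(0,a^+)\subset A$.
   Context: $Z(0,l)=S^1\times[0,l]$ (or $S^1\times[0,\infty)$ for $l=\infty$) with coordinates $\theta,t$ and complex structure $J(\partial_\theta)=\partial_t$; $Z(0,a)=S^1\times[0,a]$. An annulus in a complex curve is a domain biholomorphic to $\{r<|z|<R'\}$ whose boundary consists of smooth circles; it has conformal radius $R$ if biholomorphic to $\{1<|z|<R\}$, and is adjacent to a circle if that circle is one of its boundary components. *)

theory Defs
  imports "HOL-Complex_Analysis.Complex_Analysis" "HOL-Library.Extended_Real"
begin

text \<open>The half-infinite cylinder S^1 x [0,oo) with coordinates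
(theta,t), theta in R/2piZ, and complex structure J(d/dtheta) = d/dt has holomorphic
coordinate w = theta + i t; the map w |-> exp(i w) = e^{-t} e^{i theta} is a biholomorphism
onto the punctured closed unit disc.  We identify Z(0,l) with its image:
the boundary circle t = 0 becomes the unit circle.\<close>

definition cyl_Z :: "ereal \<Rightarrow> complex set" where
  "cyl_Z l = {exp (\<i> * (complex_of_real \<theta> + \<i> * complex_of_real t)) | \<theta> t.
                 0 \<le> t \<and> ereal t \<le> l}"

definition boundary0 :: "complex set" where
  "boundary0 = {exp (\<i> * complex_of_real \<theta>) | \<theta>. True}"

definition ring :: "real \<Rightarrow> real \<Rightarrow> complex set" where
  "ring r R = {z. r < norm z \<and> norm z < R}"

definition biholomorphic :: "complex set \<Rightarrow> complex set \<Rightarrow> bool" where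
  "biholomorphic U V \<longleftrightarrow> (\<exists>f g. f holomorphic_on U \<and> g holomorphic_on V \<and>
      f ` U = V \<and> g ` V = U \<and> (\<forall>z\<in>U. g (f z) = z) \<and> (\<forall>w\<in>V. f (g w) = w))"

definition vderiv_iter :: "nat \<Rightarrow> (real \<Rightarrow> complex) \<Rightarrow> real \<Rightarrow> complex" where
  "vderiv_iter n \<gamma> = ((\<lambda>g t. vector_derivative g (at t)) ^^ n) \<gamma>"

definition smooth_circle :: "complex set \<Rightarrow> bool" where
  "smooth_circle C \<longleftrightarrow> (\<exists>\<gamma>::real \<Rightarrow> complex.
      (\<forall>t. \<gamma> (t + 1) = \<gamma> t) \<and> inj_on \<gamma> {0..<1} \<and>
      (\<forall>n t. vderiv_iter n \<gamma> differentiable (at t)) \<and>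
      (\<forall>t. vector_derivative \<gamma> (at t) \<noteq> 0) \<and> C = range \<gamma>)"

definition is_annulus :: "complex set \<Rightarrow> bool" where
  "is_annulus A \<longleftrightarrow> open A \<and> connected A \<and>
     (\<exists>r R'. 0 < r \<and> r < R' \<and> biholomorphic A (ring r R')) \<and>
     (\<forall>C \<in> components (frontier A). smooth_circle C)"

definition has_conformal_radius :: "complex set \<Rightarrow> real \<Rightarrow> bool" where
  "has_conformal_radius A R \<longleftrightarrow> is_annulus A \<and> biholomorphic A (ring 1 R)"

definition adjacent :: "complex set \<Rightarrow> complex set \<Rightarrow> bool" where
  "adjacent A C \<longleftrightarrow> C \<in> components (frontier A)"

end

theory Submission
  imports Defs
begin

lemma exp_lift_const:
  fixes h1 h2 :: "'a::topological_space \<Rightarrow> complex"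
  assumes "connected T" "continuous_on T h1" "continuous_on T h2"
    and "\<And>x. x \<in> T \<Longrightarrow> exp (h1 x) = exp (h2 x)"
  shows "(\<lambda>x. h1 x - h2 x) constant_on T"
proof (rule continuous_discrete_range_constant[OF assms(1)])
  show "continuous_on T (\<lambda>x. h1 x - h2 x)" using assms by (intro continuous_intros)
  fix x assume x: "x \<in> T"
  show "\<exists>e>0. \<forall>y. y \<in> T \<and> h1 y - h2 y \<noteq> h1 x - h2 x \<longrightarrow> e \<le> norm ((h1 y - h2 y) - (h1 x - h2 x))"
  proof (intro exI[of _ 1] conjI allI impI)
    fix y assume y: "y \<in> T \<and> h1 y - h2 y \<noteq> h1 x - h2 x"
    obtain n :: int where n: "h1 x = h2 x + of_int (2*n) * pi * \<i>" using assms(4)[OF x] by (auto simp: exp_eq)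
    obtain m :: int where m: "h1 y = h2 y + of_int (2*m) * pi * \<i>" using assms(4) y by (auto simp: exp_eq)
    have "m \<noteq> n" using y n m by auto
    have "(h1 y - h2 y) - (h1 x - h2 x) = complex_of_real (2 * pi * of_int (m-n)) * \<i>" using n m by (simp add: algebra_simps)
    then have "norm ((h1 y - h2 y) - (h1 x - h2 x)) = 2 * pi * \<bar>of_int (m-n)\<bar>"
      by (simp only: norm_mult norm_ii norm_of_real abs_mult) simp
    moreover have "\<bar>real_of_int (m-n)\<bar> \<ge> 1" using \<open>m \<noteq> n\<close> by linarith
    ultimately show "1 \<le> norm ((h1 y - h2 y) - (h1 x - h2 x))"
      using pi_gt3 by (smt (verit) mult_le_cancel_left1 mult_nonneg_nonneg)
  qed simp
qed

lemma re_cayley_pos: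
  fixes z :: complex assumes "norm z < 1"
  shows "Re ((1 + z) / (1 - z)) > 0"
proof -
  have nz: "(Re (1 - z))\<^sup>2 + (Im (1 - z))\<^sup>2 > 0"
  proof -
    have "1 - z \<noteq> 0" using assms by auto
    then show ?thesis by (metis complex_neq_0)
  qed
  have "(Re z)\<^sup>2 + (Im z)\<^sup>2 < 1" using assms
    by (metis cmod_power2 less_1_mult norm_ge_zero power2_eq_square power2_less_eq_zero_iff not_le zero_le_one abs_square_less_1 real_sqrt_abs real_sqrt_less_iff cmod_def)
  then have "Re (1+z) * Re (1-z) + Im (1+z) * Im (1-z) > 0"
    by (simp add: algebra_simps power2_eq_square)
  then show ?thesis using nz by (simp add: Re_divide)
qed

lemma Ln_ii_pos:
  fixes r :: real assumes "r > 0"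
  shows "Ln (\<i> * of_real r) = of_real (ln r) + \<i> * of_real (pi/2)"
proof -
  have "\<i> * of_real r = exp (of_real (ln r) + \<i> * of_real (pi/2))"
  proof -
    have "exp (\<i> * of_real (pi/2)) = \<i>"
      by (metis cis_conv_exp cis_pi_half)
    then show ?thesis using assms by (simp add: exp_add exp_of_real mult.commute)
  qed
  moreover have "Ln (exp (of_real (ln r) + \<i> * of_real (pi/2))) = of_real (ln r) + \<i> * of_real (pi/2)"
    by (rule Ln_exp) (use pi_gt3 in auto)
  ultimately show ?thesis by simp
qed

lemma harnack_strip:
  fixes G :: "complex \<Rightarrow> complex" and L :: real
  defines "S \<equiv> {z. 0 < Re z \<and> Re z < L}"
  defines "\<beta> \<equiv> (1 - exp (-(2*pi^2/L))) / (1 + exp (-(2*pi^2/L)))"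
  assumes L: "L > 0" and holG: "G holomorphic_on S" and neg: "\<And>z. z \<in> S \<Longrightarrow> Re (G z) < 0"
    and z0: "Re \<zeta>0 = L/2" and jump: "norm (G (\<zeta>0 + 2*pi*\<i>) - G \<zeta>0) \<ge> 2*pi"
  shows "- Re (G \<zeta>0) \<ge> pi * (1 - \<beta>) / \<beta>"
proof -
  define s where "s = 2*pi^2/L"
  have s: "s > 0" using L by (simp add: s_def)
  define w0 where "w0 = G \<zeta>0"
  define \<psi> where "\<psi> z = \<zeta>0 - of_real (L/2) + (- \<i> * of_real (L/pi)) * Ln (\<i> * ((1 + z) / (1 - z)))" for z
  have imw: "Im (\<i> * ((1 + z) / (1 - z))) > 0" if "norm z < 1" for z
    using re_cayley_pos[OF that] by (metis Im_i_times)
  have psiS: "\<psi> z \<in> S" if "norm z < 1" for z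
  proof -
    define Y where "Y = Im (Ln (\<i> * ((1 + z) / (1 - z))))"
    have Y: "0 < Y" "Y < pi"
      using Im_Ln_pos_lt_imp[OF imw[OF that]] by (auto simp: Y_def)
    have re: "Re (\<psi> z) = (L/pi) * Y"
      using z0 by (simp add: \<psi>_def Y_def)
    have "0 < (L/pi) * Y" using Y L by simp
    moreover have "(L/pi) * Y < (L/pi) * pi" using Y L by (intro mult_strict_left_mono) auto
    ultimately show ?thesis using re by (simp add: S_def)
  qed
  have holpsi: "\<psi> holomorphic_on ball 0 1"
    unfolding \<psi>_def
  proof (intro holomorphic_intros)
    fix z :: complex assume "z \<in> ball 0 1"
    then have "norm z < 1" by simp
    then show "1 - z \<noteq> 0" by auto
    show "\<i> * ((1 + z) / (1 - z)) \<notin> \<real>\<^sub>\<le>\<^sub>0"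
      using imw[OF \<open>norm z < 1\<close>] by (auto simp: complex_nonpos_Reals_iff)
  qed
  have w0neg: "Re w0 < 0" unfolding w0_def
    using neg[of \<zeta>0] z0 L by (simp add: S_def)
  define h where "h z = (G (\<psi> z) - w0) / (G (\<psi> z) + cnj w0)" for z
  have den: "G (\<psi> z) + cnj w0 \<noteq> 0" if "norm z < 1" for z
  proof -
    have "Re (G (\<psi> z) + cnj w0) < 0" using neg[OF psiS[OF that]] w0neg by simp
    then show ?thesis by (metis zero_complex.simps(1) less_irrefl)
  qed
  have lt: "norm (w - w0) < norm (w + cnj w0)" if "Re w < 0" for w
  proof -
    have "(norm (w - w0))^2 < (norm (w + cnj w0))^2"
      using that w0neg unfolding cmod_power2
      by (simp add: power2_eq_square algebra_simps mult_neg_neg)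
    then show ?thesis by (simp add: power2_less_imp_less)
  qed
  have holh: "h holomorphic_on ball 0 1"
    unfolding h_def
  proof (intro holomorphic_intros)
    have "(G \<circ> \<psi>) holomorphic_on ball 0 1"
      by (rule holomorphic_on_compose_gen[OF holpsi holG]) (use psiS in auto)
    then show "(\<lambda>z. G (\<psi> z)) holomorphic_on ball 0 1" by (simp add: o_def)
    then show "(\<lambda>z. G (\<psi> z)) holomorphic_on ball 0 1" .
    fix z :: complex assume "z \<in> ball 0 1"
    then show "G (\<psi> z) + cnj w0 \<noteq> 0" using den by simp
  qed
  have psi0: "\<psi> 0 = \<zeta>0"
    using Ln_ii_pos[of 1] by (simp add: \<psi>_def field_simps mult.left_commute)
  have h0: "h 0 = 0" by (simp add: h_def psi0 w0_def)
  have hlt: "norm (h z) < 1" if "norm z < 1" for z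
  proof -
    have "norm (G (\<psi> z) - w0) < norm (G (\<psi> z) + cnj w0)" using lt neg psiS that by blast
    then show ?thesis using den[OF that] by (simp add: h_def norm_divide divide_less_eq)
  qed
  define x1 where "x1 = (exp (-s) - 1) / (exp (-s) + 1)"
  have ex: "exp (-s) < 1" "exp (-s) > 0" using s by auto
  have x1abs: "\<bar>x1\<bar> = \<beta>"
  proof -
    have bdef: "\<beta> = (1 - exp (-s)) / (1 + exp (-s))" by (simp add: \<beta>_def s_def)
    have "x1 = - \<beta>" unfolding bdef x1_def by (metis minus_diff_eq minus_divide_left add.commute)
    moreover have "\<beta> > 0" unfolding bdef using ex by (intro divide_pos_pos) linarith+
    ultimately show ?thesis by simp
  qed
  have b01: "\<beta> < 1" "\<beta> > 0"
  proof -
    have bdef: "\<beta> = (1 - exp (-s)) / (1 + exp (-s))" by (simp add: \<beta>_def s_def)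
    show "\<beta> > 0" unfolding bdef using ex by (intro divide_pos_pos) linarith+
    show "\<beta> < 1" unfolding bdef using ex by (subst divide_less_eq_1_pos) linarith+
  qed
  have x1n: "norm (complex_of_real x1) < 1" using x1abs b01 by simp
  have ratio: "(1 + complex_of_real x1) / (1 - complex_of_real x1) = of_real (exp (-s))"
  proof -
    have "(1 + x1) / (1 - x1) = exp (-s)"
    proof -
      define e where "e = exp (-s)"
      have e: "e > 0" by (simp add: e_def)
      have "(1 + (e-1)/(e+1)) / (1 - (e-1)/(e+1)) = e"
      proof -
        have d: "e + 1 > 0" using e by simp
        have "1 + (e-1)/(e+1) = (2*e)/(e+1)" using d by (simp add: divide_simps)
        moreover have "1 - (e-1)/(e+1) = 2/(e+1)" using d by (simp add: divide_simps)
        ultimately show ?thesis using d by simp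
      qed
      then show ?thesis by (simp add: x1_def e_def add.commute)
    qed
    then show ?thesis by (metis of_real_1 of_real_add of_real_diff of_real_divide)
  qed
  have psix: "\<psi> (of_real x1) = \<zeta>0 + 2*pi*\<i>"
  proof -
    define P where "P = (- \<i> * of_real (L/pi)) * (of_real (-s) + \<i> * of_real (pi/2))"
    have a: "\<psi> (of_real x1) = \<zeta>0 - of_real (L/2) + P"
      unfolding \<psi>_def ratio P_def using Ln_ii_pos[of "exp (-s)"] by simp
    have c: "L * s / pi = 2 * pi"
    proof -
      have "L * s = 2 * pi * pi" using L by (simp add: s_def power2_eq_square)
      then show ?thesis by simp
    qed
    have b: "P = of_real (L / 2) + \<i> * of_real (L * s / pi)"
      unfolding P_def by (simp add: complex_eq_iff)
    show ?thesis using a b c by simp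
  qed
  have "norm (h (of_real x1)) \<le> norm (complex_of_real x1)"
    by (rule Schwarz_Lemma(1)[OF holh h0 hlt x1n]) auto
  then have hb: "norm (h (of_real x1)) \<le> \<beta>" using x1abs by simp
  define w where "w = G (\<zeta>0 + 2*pi*\<i>)"
  define X where "X = norm (w - w0)"
  define Y where "Y = - 2 * Re w0"
  have e1: "X \<le> \<beta> * norm (w + cnj w0)"
  proof -
    have "X = norm (h (of_real x1)) * norm (w + cnj w0)"
      using den[OF x1n] by (simp add: X_def h_def psix w_def norm_divide)
    also have "\<dots> \<le> \<beta> * norm (w + cnj w0)" using hb by (simp add: mult_right_mono)
    finally show ?thesis .
  qed
  have e2: "norm (w + cnj w0) \<le> X + Y"
  proof -
    have "norm (w + cnj w0) \<le> norm (w - w0) + norm (w0 + cnj w0)"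
    proof -
      have "w + cnj w0 = (w - w0) + (w0 + cnj w0)" by simp
      then show ?thesis using norm_triangle_ineq[of "w - w0" "w0 + cnj w0"] by simp
    qed
    moreover have "norm (w0 + cnj w0) = - 2 * Re w0"
      using w0neg by (simp add: complex_add_cnj norm_mult)
    ultimately show ?thesis by (simp add: X_def Y_def)
  qed
  have e3: "X \<le> \<beta> * (X + Y)" using e1 mult_left_mono[OF e2, of \<beta>] b01 by linarith
  have X2: "X \<ge> 2*pi" using jump by (simp add: X_def w_def w0_def)
  have "(1-\<beta>)*(2*pi) \<le> (1-\<beta>)*X" by (rule mult_left_mono) (use b01 X2 in auto)
  also have "(1-\<beta>)*X \<le> \<beta>*Y" using e3 by (simp add: algebra_simps)
  finally have "pi * (1-\<beta>) \<le> \<beta> * (- Re w0)" by (simp add: Y_def)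
  then show ?thesis using b01 by (simp add: w0_def pos_divide_le_eq mult.commute)
qed

definition beta0 :: "real \<Rightarrow> real" where
  "beta0 L = (1 - exp (-(2*pi^2/L))) / (1 + exp (-(2*pi^2/L)))"

definition rho0 :: "real \<Rightarrow> real" where
  "rho0 R = exp (- (pi * (1 - beta0 (ln R)) / beta0 (ln R)))"

lemma rho0_lt1: assumes "R > 1" shows "rho0 R < 1" "rho0 R > 0"
proof -
  define L where "L = ln R"
  have L: "L > 0" using assms by (simp add: L_def)
  have ex: "exp (-(2*pi^2/L)) < 1" "exp (-(2*pi^2/L)) > 0" using L by auto
  have b: "beta0 L > 0" "beta0 L < 1" unfolding beta0_def using ex
    by (auto intro!: divide_pos_pos simp only: divide_less_eq_1_pos)
  have "pi * (1 - beta0 L) / beta0 L > 0" using b by simp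
  then show "rho0 R < 1" by (simp add: rho0_def L_def[symmetric])
  show "rho0 R > 0" by (simp add: rho0_def)
qed

lemma core_bound:
  fixes \<phi> :: "complex \<Rightarrow> complex" and R :: real
  assumes R: "R > 1" and hol: "\<phi> holomorphic_on ring 1 R"
    and nz: "\<And>z. z \<in> ring 1 R \<Longrightarrow> \<phi> z \<noteq> 0 \<and> norm (\<phi> z) < 1"
    and wn: "winding_number (\<phi> \<circ> circlepath 0 (exp (ln R / 2))) 0 \<noteq> 0"
    and z: "norm z = exp (ln R / 2)"
  shows "norm (\<phi> z) \<le> rho0 R"
proof -
  define L where "L = ln R"
  have L: "L > 0" using R by (simp add: L_def)
  have eL: "exp L = R" using R by (simp add: L_def)
  define S where "S = {z::complex. 0 < Re z \<and> Re z < L}"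
  have Seq: "S = {z. Re z > 0} \<inter> {z. Re z < L}" by (auto simp: S_def)
  have convS: "convex S" unfolding Seq by (intro convex_Int convex_halfspace_Re_gt convex_halfspace_Re_lt)
  have openS: "open S" unfolding Seq by (intro open_Int open_halfspace_Re_gt open_halfspace_Re_lt)
  have expS: "exp w \<in> ring 1 R" if "w \<in> S" for w
  proof -
    have "exp (Re w) < exp L" using that by (simp add: S_def)
    then show ?thesis using that by (simp add: ring_def S_def norm_exp_eq_Re eL)
  qed
  have holF: "(\<phi> \<circ> exp) holomorphic_on S"
    by (rule holomorphic_on_compose_gen[OF holomorphic_on_exp hol]) (use expS in auto)
  have Fnz: "(\<phi> \<circ> exp) w \<noteq> 0" if "w \<in> S" for w using nz expS that by auto
  have cS: "complex_of_real (L/2) \<in> S" using L by (simp add: S_def)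
  obtain G where holG: "G holomorphic_on S" and eG: "\<And>w. w \<in> S \<Longrightarrow> exp (G w) = (\<phi> \<circ> exp) w"
    using holomorphic_logarithm_exists[OF convS openS holF Fnz cS] by blast
  have Gneg: "Re (G w) < 0" if "w \<in> S" for w
  proof -
    have "norm (exp (G w)) < 1" using eG[OF that] nz expS[OF that] by simp
    then show ?thesis by (simp add: norm_exp_eq_Re)
  qed
  have contG: "continuous_on S G" using holG holomorphic_on_imp_continuous_on by blast
  have shiftS: "w + 2*pi*\<i> \<in> S" if "w \<in> S" for w using that by (simp add: S_def)
  have e2pi: "exp (w + 2*pi*\<i>) = exp w" for w :: complex
    by (simp add: exp_add)
  have "(\<lambda>w. G (w + 2*pi*\<i>) - G w) constant_on S"
  proof (rule exp_lift_const)
    show "connected S" using convS convex_connected by blast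
    show "continuous_on S G" by (fact contG)
    have "continuous_on S (\<lambda>w. w + 2*pi*\<i>)" by (intro continuous_intros)
    then show "continuous_on S (\<lambda>w. G (w + 2*pi*\<i>))"
      using continuous_on_compose2[OF contG] shiftS by blast
    fix w assume "w \<in> S"
    then show "exp (G (w + 2*pi*\<i>)) = exp (G w)"
      using eG shiftS e2pi by simp
  qed
  then obtain k where k: "\<And>w. w \<in> S \<Longrightarrow> G (w + 2*pi*\<i>) - G w = k"
    unfolding constant_on_def by blast
  define c where "c = exp (L/2)"
  have c: "c > 1" "c < R" using L eL by (auto simp: c_def)
  define p where "p = \<phi> \<circ> circlepath 0 c"
  have pimg: "path_image (circlepath 0 c) \<subseteq> ring 1 R" using c by (auto simp: ring_def)
  have pathp: "path p" unfolding p_def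
    by (rule path_continuous_image[OF path_circlepath continuous_on_subset[OF holomorphic_on_imp_continuous_on[OF hol] pimg]])
  have closedp: "pathfinish p = pathstart p" by (simp add: p_def pathfinish_def pathstart_def circlepath)
  have p0: "0 \<notin> path_image p" using nz pimg by (auto simp: p_def path_image_compose)
  obtain q where pq: "path q" and qd: "pathfinish q - pathstart q = 2 * of_real pi * \<i> * winding_number p 0"
    and qe: "\<And>t. t \<in> {0..1} \<Longrightarrow> p t = 0 + exp (q t)"
    using winding_number_as_continuous_log[OF pathp p0] by blast
  define h2 where "h2 t = G (of_real (L/2) + 2*pi*\<i>* of_real t)" for t :: real
  have h2S: "of_real (L/2) + 2*pi*\<i>* of_real t \<in> S" for t :: real using L by (simp add: S_def)
  have "(\<lambda>t. q t - h2 t) constant_on {0..1}"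
  proof (rule exp_lift_const)
    show "connected {0..(1::real)}" by simp
    show "continuous_on {0..1} q" using pq by (simp add: path_def)
    have ct: "continuous_on {0..1} (\<lambda>t::real. of_real (L/2) + 2*pi*\<i>* of_real t)" by (intro continuous_intros)
    have "continuous_on ((\<lambda>t::real. of_real (L/2) + 2*pi*\<i>* of_real t) ` {0..1}) G"
      by (rule continuous_on_subset[OF contG]) (use h2S in blast)
    from continuous_on_compose[OF ct this] show "continuous_on {0..1} h2" by (simp add: h2_def o_def)
    fix t :: real assume t: "t \<in> {0..1}"
    have "exp (h2 t) = \<phi> (exp (of_real (L/2) + 2*pi*\<i>* of_real t))"
      unfolding h2_def using eG[OF h2S] by simp
    also have "exp (of_real (L/2) + 2*pi*\<i>* of_real t) = circlepath 0 c t"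
    proof -
      have "exp (complex_of_real L / 2) = complex_of_real (exp (L/2))"
        by (metis exp_of_real of_real_divide of_real_numeral)
      then show ?thesis by (simp add: circlepath c_def exp_add)
    qed
    finally show "exp (q t) = exp (h2 t)" using qe[OF t] by (simp add: p_def)
  qed
  then obtain y where "\<And>t. t \<in> {0..1} \<Longrightarrow> q t - h2 t = y" unfolding constant_on_def by blast
  then have "q 1 - h2 1 = q 0 - h2 0" by simp
  then have "q 1 - q 0 = h2 1 - h2 0" by (simp add: algebra_simps)
  also have "h2 1 - h2 0 = k" using k[OF cS] by (simp add: h2_def)
  finally have kW: "k = 2 * of_real pi * \<i> * winding_number p 0" using qd by (simp add: pathfinish_def pathstart_def)
  have "winding_number p 0 \<in> \<int>" by (rule integer_winding_number[OF pathp closedp p0])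
  then obtain n :: int where n: "winding_number p 0 = of_int n" by (auto elim: Ints_cases)
  have "n \<noteq> 0" using wn n by (simp add: p_def c_def L_def)
  then have "norm k = 2 * pi * \<bar>of_int n\<bar>" using kW n by (simp add: norm_mult)
  then have knorm: "norm k \<ge> 2 * pi"
  proof -
    have "\<bar>real_of_int n\<bar> \<ge> 1" using \<open>n \<noteq> 0\<close> by linarith
    then have "2 * pi * 1 \<le> 2 * pi * \<bar>real_of_int n\<bar>" by (intro mult_left_mono) auto
    then show ?thesis using \<open>norm k = 2 * pi * \<bar>of_int n\<bar>\<close> by simp
  qed
  have zne: "z \<noteq> 0" using z by auto
  define \<zeta>0 where "\<zeta>0 = Ln z"
  have re0: "Re \<zeta>0 = L/2" using z zne by (simp add: \<zeta>0_def Re_Ln L_def)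
  have z0S: "\<zeta>0 \<in> S" using re0 L by (simp add: S_def)
  have h1: "G holomorphic_on {z. 0 < Re z \<and> Re z < L}" using holG by (simp add: S_def)
  have h2: "\<And>z. z \<in> {z. 0 < Re z \<and> Re z < L} \<Longrightarrow> Re (G z) < 0" using Gneg by (simp add: S_def)
  have h3: "2 * pi \<le> norm (G (\<zeta>0 + 2*pi*\<i>) - G \<zeta>0)" using k[OF z0S] knorm by simp
  have "- Re (G \<zeta>0) \<ge> pi * (1 - beta0 L) / beta0 L"
    using harnack_strip[OF L h1 h2 re0 h3] unfolding beta0_def .
  moreover have "\<phi> z = exp (G \<zeta>0)" using eG[OF z0S] zne by (simp add: \<zeta>0_def)
  ultimately show ?thesis
    by (simp add: rho0_def norm_exp_eq_Re L_def[symmetric])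
qed

lemma open_ring: "open (ring a b)"
proof -
  have "ring a b = {z. a < norm z} \<inter> {z. norm z < b}" by (auto simp: ring_def)
  moreover have "open {z::complex. a < norm z}" by (intro open_Collect_less continuous_intros)
  moreover have "open {z::complex. norm z < b}" by (intro open_Collect_less continuous_intros)
  ultimately show ?thesis by auto
qed

lemma connected_ring: "connected (ring a b)"
proof -
  have "ring a b = {x::complex. a < norm (x - 0) \<and> norm (x - 0) < b}" by (simp add: ring_def)
  moreover have "connected {x::complex. a < norm (x - 0) \<and> norm (x - 0) < b}"
    by (rule connected_annulus(1)) simp
  ultimately show ?thesis by simp
qed

lemma first_hit:
  fixes A :: "complex set"
  assumes "open A" "x \<notin> A" "a \<in> A"
  obtains h where "path h" "pathstart h = x" "path_image h \<subseteq> closed_segment x a"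
    "path_image h \<inter> A = {}" "pathfinish h \<in> frontier A"
proof -
  have "pathstart (linepath x a) \<in> closure (- A)" using assms closure_subset by fastforce
  moreover have "pathfinish (linepath x a) \<notin> - A" using assms by simp
  ultimately obtain h where h: "path h" "pathstart h = x" "path_image h \<subseteq> closed_segment x a"
      "path_image h - {pathfinish h} \<subseteq> interior (- A)" "pathfinish h \<in> frontier (- A)"
    using exists_path_subpath_to_frontier[of "linepath x a" "-A"] by auto
  have fr0: "pathfinish h \<in> frontier A" using h(5) by simp
  then have fr: "pathfinish h \<notin> A" using assms(1) by (auto simp: frontier_def interior_open)
  have "path_image h \<inter> A = {}" using h(4) fr interior_subset by blast
  then show ?thesis using that h fr0 by simp
qed

lemma cluster_disj:
  fixes \<phi> \<psi> :: "complex \<Rightarrow> complex"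
  assumes A: "open A" and contpsi: "continuous_on A \<psi>"
    and im1: "\<phi> ` U = A" and inv1: "\<And>z. z \<in> U \<Longrightarrow> \<psi> (\<phi> z) = z" and im2: "\<psi> ` A \<subseteq> U"
    and TU: "\<And>n. T n \<subseteq> U"
    and away: "\<And>z. z \<in> U \<Longrightarrow> \<exists>n \<epsilon>. \<epsilon> > 0 \<and> ball z \<epsilon> \<inter> T n = {}"
  shows "(\<Inter>n. closure (\<phi> ` T n)) \<inter> A = {}"
proof (rule ccontr)
  assume "(\<Inter>n. closure (\<phi> ` T n)) \<inter> A \<noteq> {}"
  then obtain w where w: "w \<in> A" "\<And>n. w \<in> closure (\<phi> ` T n)" by blast
  define z where "z = \<psi> w"
  have zU: "z \<in> U" using im2 w by (auto simp: z_def)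
  obtain n \<epsilon> where e: "\<epsilon> > 0" "ball z \<epsilon> \<inter> T n = {}" using away[OF zU] by blast
  obtain \<delta> where d: "\<delta> > 0" "\<And>w'. w' \<in> A \<Longrightarrow> dist w' w < \<delta> \<Longrightarrow> dist (\<psi> w') (\<psi> w) < \<epsilon>"
    using contpsi w(1) e(1) unfolding continuous_on_iff by meson
  obtain w' where w': "w' \<in> \<phi> ` T n" "dist w' w < \<delta>" using w(2)[of n] d(1) unfolding closure_approachable by blast
  then obtain z' where z': "z' \<in> T n" "w' = \<phi> z'" by blast
  have "\<psi> w' = z'" using z' inv1 TU by blast
  have "w' \<in> A" using w'(1) im1 TU by blast
  then have "dist z' z < \<epsilon>" using d(2)[OF _ w'(2)] \<open>\<psi> w' = z'\<close> by (simp add: z_def)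
  then have "z' \<in> ball z \<epsilon>" by (simp add: dist_commute)
  then show False using e(2) z'(1) by blast
qed

lemma cluster_conn:
  fixes \<phi> :: "complex \<Rightarrow> complex" and T :: "nat \<Rightarrow> complex set"
  assumes cont: "continuous_on U \<phi>" and bd: "bounded (\<phi> ` U)"
    and TU: "\<And>n. T n \<subseteq> U" and conn: "\<And>n. connected (T n)"
    and mono: "\<And>m n. m \<le> n \<Longrightarrow> T n \<subseteq> T m"
  shows "connected (\<Inter>n. closure (\<phi> ` T n))" "closed (\<Inter>n. closure (\<phi> ` T n))"
proof -
  show "connected (\<Inter>n. closure (\<phi> ` T n))"
  proof (rule connected_nest[where S="\<lambda>n. closure (\<phi> ` T n)"])
    fix n
    show "compact (closure (\<phi> ` T n))"
    proof -
      have "bounded (\<phi> ` T n)" using bd TU[of n] by (rule bounded_subset[OF _ image_mono])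
      then show ?thesis by (simp add: compact_closure)
    qed
    have "connected (\<phi> ` T n)" using connected_continuous_image[OF continuous_on_subset[OF cont TU] conn] .
    then show "connected (closure (\<phi> ` T n))" by (rule connected_imp_connected_closure)
  next
    fix m n :: nat assume "m \<le> n"
    then show "closure (\<phi> ` T n) \<subseteq> closure (\<phi> ` T m)" using mono by (intro closure_mono image_mono)
  qed
  show "closed (\<Inter>n. closure (\<phi> ` T n))" by auto
qed

lemma frontier_cover:
  fixes \<phi> :: "complex \<Rightarrow> complex" and R :: real and e :: real
  assumes R: "R > 1" and e: "0 < e" "1 + e < R - e"
    and A: "open A" and cont: "continuous_on (ring 1 R) \<phi>" and im1: "\<phi> ` ring 1 R = A"
    and b: "b \<in> frontier A"
    and bo: "b \<notin> closure (\<phi> ` ring (R - e) R)" and bi: "b \<notin> closure (\<phi> ` ring 1 (1 + e))"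
  shows False
proof -
  define C where "C = closure (\<phi> ` ring (R - e) R) \<union> closure (\<phi> ` ring 1 (1 + e))"
  have "open (- C)" unfolding C_def by (intro open_Compl closed_Un closed_closure)
  moreover have "b \<in> - C" using bo bi by (simp add: C_def)
  ultimately obtain \<delta> where d: "\<delta> > 0" "ball b \<delta> \<subseteq> - C" by (rule openE)
  define M where "M = cball (0::complex) (R - e) \<inter> - ball 0 (1 + e)"
  have MR: "M \<subseteq> ring 1 R" using e by (auto simp: M_def ring_def)
  have "compact M" unfolding M_def by (intro compact_Int_closed compact_cball closed_Compl open_ball)
  then have cM: "compact (\<phi> ` M)" using compact_continuous_image continuous_on_subset[OF cont MR] by blast
  have "b \<in> closure (\<phi> ` M)"
    unfolding closure_approachable
  proof (intro allI impI)
    fix \<epsilon> :: real assume "\<epsilon> > 0"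
    have "b \<in> closure A" using b by (simp add: frontier_def)
    moreover have "min \<delta> \<epsilon> > 0" using \<open>\<epsilon> > 0\<close> d(1) by simp
    ultimately obtain a where a: "a \<in> A" "dist b a < min \<delta> \<epsilon>"
      using closure_approachableD by blast
    then obtain z where z: "z \<in> ring 1 R" "a = \<phi> z" using im1 by blast
    have "a \<in> ball b \<delta>" using a(2) by simp
    then have "a \<notin> C" using d(2) by blast
    have "z \<notin> ring (R - e) R"
    proof
      assume "z \<in> ring (R - e) R"
      then have "a \<in> \<phi> ` ring (R - e) R" using z(2) by simp
      then have "a \<in> closure (\<phi> ` ring (R - e) R)" by (rule subsetD[OF closure_subset])
      then show False using \<open>a \<notin> C\<close> by (simp add: C_def)
    qed
    moreover have "z \<notin> ring 1 (1 + e)"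
    proof
      assume "z \<in> ring 1 (1 + e)"
      then have "a \<in> \<phi> ` ring 1 (1 + e)" using z(2) by simp
      then have "a \<in> closure (\<phi> ` ring 1 (1 + e))" by (rule subsetD[OF closure_subset])
      then show False using \<open>a \<notin> C\<close> by (simp add: C_def)
    qed
    ultimately have "z \<notin> ring (R - e) R" "z \<notin> ring 1 (1 + e)" by blast+
    then have "\<not> (R - e < norm z \<and> norm z < R)" "\<not> (1 < norm z \<and> norm z < 1 + e)" by (simp_all add: ring_def)
    moreover have "1 < norm z" "norm z < R" using z(1) by (simp_all add: ring_def)
    ultimately have "norm z \<le> R - e" "\<not> norm z < 1 + e" by linarith+
    then have "z \<in> M" by (simp add: M_def)
    moreover have "dist a b < \<epsilon>" using a(2) by (simp add: dist_commute)
    ultimately show "\<exists>y\<in>\<phi> ` M. dist y b < \<epsilon>" using z(2) by blast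
  qed
  moreover have "closure (\<phi> ` M) = \<phi> ` M" using cM by (simp add: compact_imp_closed closure_closed)
  ultimately have "b \<in> \<phi> ` M" by simp
  then have "b \<in> A" using MR im1 by blast
  then show False using b A by (simp add: frontier_def interior_open)
qed

lemma topo_part:
  fixes \<phi> \<psi> :: "complex \<Rightarrow> complex" and R c :: real
  assumes R: "R > 1" and c: "1 < c" "c < R"
    and A: "open A" "A \<subseteq> ball 0 1"
    and hol1: "\<phi> holomorphic_on ring 1 R" and hol2: "\<psi> holomorphic_on A"
    and im1: "\<phi> ` ring 1 R = A" and im2: "\<psi> ` A = ring 1 R"
    and inv1: "\<And>z. z \<in> ring 1 R \<Longrightarrow> \<psi> (\<phi> z) = z"
    and comp: "sphere 0 1 \<in> components (frontier A)"
    and x: "x \<in> ball 0 1" "x \<notin> A"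
  shows "winding_number (\<phi> \<circ> circlepath 0 c) x \<noteq> 0"
proof -
  define \<Gamma> where "\<Gamma> = \<phi> \<circ> circlepath 0 c"
  have cont1: "continuous_on (ring 1 R) \<phi>" using hol1 holomorphic_on_imp_continuous_on by blast
  have cont2: "continuous_on A \<psi>" using hol2 holomorphic_on_imp_continuous_on by blast
  have cimg: "path_image (circlepath 0 c) \<subseteq> ring 1 R" using c by (auto simp: ring_def)
  have pathG: "path \<Gamma>" unfolding \<Gamma>_def
    by (rule path_continuous_image[OF path_circlepath continuous_on_subset[OF cont1 cimg]])
  have vpG: "valid_path \<Gamma>" unfolding \<Gamma>_def
    by (rule valid_path_compose_holomorphic[OF valid_path_circlepath hol1 open_ring cimg])
  have loopG: "pathfinish \<Gamma> = pathstart \<Gamma>" by (simp add: \<Gamma>_def pathfinish_def pathstart_def circlepath)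
  have imG: "path_image \<Gamma> \<subseteq> A" unfolding \<Gamma>_def path_image_compose using cimg im1 by blast
  have Ane: "A \<noteq> {}"
  proof -
    have "norm (complex_of_real ((1 + R)/2)) = (1 + R)/2" using R by (simp only: norm_of_real) simp
    then have "complex_of_real ((1 + R)/2) \<in> ring 1 R" using R by (simp add: ring_def)
    then show ?thesis using im1 by blast
  qed
  then obtain a0 where a0: "a0 \<in> A" by blast
  have frA: "frontier A \<inter> A = {}" using A(1) by (auto simp: frontier_def interior_open)
  define e where "e n = (R - 1) / (2 * (real n + 2))" for n :: nat
  have epos: "e n > 0" for n using R by (simp add: e_def)
  have esmall: "e n \<le> (R - 1) / 4" for n
    unfolding e_def by (rule divide_left_mono) (use R in auto)
  have emono: "e n \<le> e m" if "m \<le> n" for m n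
    using R that by (simp add: e_def frac_le)
  have etend: "\<exists>n. e n < \<epsilon>" if "\<epsilon> > 0" for \<epsilon>
  proof -
    obtain n :: nat where n: "(R - 1) / (2 * \<epsilon>) < real n" using reals_Archimedean2 by blast
    have "R - 1 = (R - 1) / (2 * \<epsilon>) * (2 * \<epsilon>)" using that by simp
    also have "\<dots> < real n * (2 * \<epsilon>)" by (rule mult_strict_right_mono[OF n]) (use that in simp)
    also have "\<dots> \<le> (real n + 2) * (2 * \<epsilon>)" using that by simp
    finally have "R - 1 < \<epsilon> * (2 * (real n + 2))" by (simp add: algebra_simps)
    then have "e n < \<epsilon>" unfolding e_def by (subst pos_divide_less_eq) auto
    then show ?thesis by blast
  qed
  define To where "To n = ring (R - e n) R" for n
  define Ti where "Ti n = ring 1 (1 + e n)" for n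
  have ToU: "To n \<subseteq> ring 1 R" for n using esmall[of n] R by (auto simp: To_def ring_def)
  have TiU: "Ti n \<subseteq> ring 1 R" for n using esmall[of n] R by (auto simp: Ti_def ring_def)
  define Lo where "Lo = (\<Inter>n. closure (\<phi> ` To n))"
  define Li where "Li = (\<Inter>n. closure (\<phi> ` Ti n))"
  have bdA: "bounded (\<phi> ` ring 1 R)" using im1 A(2) bounded_ball bounded_subset by metis
  have monoTo: "To n \<subseteq> To m" if "m \<le> n" for m n
    using emono[OF that] by (auto simp: To_def ring_def)
  have monoTi: "Ti n \<subseteq> Ti m" if "m \<le> n" for m n
    using emono[OF that] by (auto simp: Ti_def ring_def)
  have connTo: "connected (To n)" for n by (simp add: To_def connected_ring)
  have connTi: "connected (Ti n)" for n by (simp add: Ti_def connected_ring)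
  have monoTo': "\<And>m n. m \<le> n \<Longrightarrow> To n \<subseteq> To m" using monoTo by blast
  have monoTi': "\<And>m n. m \<le> n \<Longrightarrow> Ti n \<subseteq> Ti m" using monoTi by blast
  note cco = cluster_conn[where T=To, OF cont1 bdA ToU connTo monoTo']
  note cci = cluster_conn[where T=Ti, OF cont1 bdA TiU connTi monoTi']
  have Lo_props: "connected Lo" "closed Lo"
    unfolding Lo_def using cco by simp_all
  have Li_props: "connected Li" "closed Li"
    unfolding Li_def using cci by simp_all
  have awayo: "\<exists>n \<epsilon>. \<epsilon> > 0 \<and> ball z \<epsilon> \<inter> To n = {}" if "z \<in> ring 1 R" for z
  proof -
    define \<epsilon> where "\<epsilon> = (R - norm z) / 2"
    have ep: "\<epsilon> > 0" using that by (simp add: \<epsilon>_def ring_def)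
    obtain n where n: "e n < \<epsilon>" using etend[OF ep] by blast
    have "ball z \<epsilon> \<inter> To n = {}"
    proof (rule ccontr)
      assume "ball z \<epsilon> \<inter> To n \<noteq> {}"
      then obtain y where y: "dist z y < \<epsilon>" "R - e n < norm y" by (auto simp: To_def ring_def)
      have "norm y \<le> norm z + dist z y" by (metis dist_commute dist_norm norm_triangle_sub add.commute)
      then show False using y n by (simp add: \<epsilon>_def)
    qed
    then show ?thesis using ep by blast
  qed
  have awayi: "\<exists>n \<epsilon>. \<epsilon> > 0 \<and> ball z \<epsilon> \<inter> Ti n = {}" if "z \<in> ring 1 R" for z
  proof -
    define \<epsilon> where "\<epsilon> = (norm z - 1) / 2"
    have ep: "\<epsilon> > 0" using that by (simp add: \<epsilon>_def ring_def)
    obtain n where n: "e n < \<epsilon>" using etend[OF ep] by blast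
    have "ball z \<epsilon> \<inter> Ti n = {}"
    proof (rule ccontr)
      assume "ball z \<epsilon> \<inter> Ti n \<noteq> {}"
      then obtain y where y: "dist z y < \<epsilon>" "norm y < 1 + e n" by (auto simp: Ti_def ring_def)
      have "norm z \<le> norm y + dist z y" by (metis dist_norm norm_triangle_sub add.commute)
      then show False using y n by (simp add: \<epsilon>_def)
    qed
    then show ?thesis using ep by blast
  qed
  have im2': "\<psi> ` A \<subseteq> ring 1 R" using im2 by simp
  have Lo_A: "Lo \<inter> A = {}"
    unfolding Lo_def by (rule cluster_disj[OF A(1) cont2 im1 inv1 im2' ToU awayo])
  have Li_A: "Li \<inter> A = {}"
    unfolding Li_def by (rule cluster_disj[OF A(1) cont2 im1 inv1 im2' TiU awayi])
  have Lo_cl: "Lo \<subseteq> closure A"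
  proof -
    have "Lo \<subseteq> closure (\<phi> ` To 0)" unfolding Lo_def by blast
    also have "\<dots> \<subseteq> closure A" using ToU[of 0] im1 by (intro closure_mono) blast
    finally show ?thesis .
  qed
  have Li_cl: "Li \<subseteq> closure A"
  proof -
    have "Li \<subseteq> closure (\<phi> ` Ti 0)" unfolding Li_def by blast
    also have "\<dots> \<subseteq> closure A" using TiU[of 0] im1 by (intro closure_mono) blast
    finally show ?thesis .
  qed
  have Lo_fr: "Lo \<subseteq> frontier A" using Lo_cl Lo_A A(1) by (auto simp: frontier_def interior_open)
  have Li_fr: "Li \<subseteq> frontier A" using Li_cl Li_A A(1) by (auto simp: frontier_def interior_open)
  have cover: "frontier A \<subseteq> Lo \<union> Li"
  proof
    fix b assume b: "b \<in> frontier A"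
    show "b \<in> Lo \<union> Li"
    proof (rule ccontr)
      assume "b \<notin> Lo \<union> Li"
      then obtain n1 n2 where n1: "b \<notin> closure (\<phi> ` To n1)" and n2: "b \<notin> closure (\<phi> ` Ti n2)"
        unfolding Lo_def Li_def by blast
      define n where "n = max n1 n2"
      have "closure (\<phi> ` To n) \<subseteq> closure (\<phi> ` To n1)"
        using monoTo[of n1 n] by (intro closure_mono image_mono) (simp add: n_def)
      then have bo: "b \<notin> closure (\<phi> ` ring (R - e n) R)" using n1 by (auto simp: To_def)
      have "closure (\<phi> ` Ti n) \<subseteq> closure (\<phi> ` Ti n2)"
        using monoTi[of n2 n] by (intro closure_mono image_mono) (simp add: n_def)
      then have bi: "b \<notin> closure (\<phi> ` ring 1 (1 + e n))" using n2 by (auto simp: Ti_def)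
      have "1 + e n < R - e n" using esmall[of n] R by simp
      then show False using frontier_cover[OF R epos[of n] _ A(1) cont1 im1 b bo bi] by blast
    qed
  qed
  have convB: "convex (ball (0::complex) 1)" by simp
  have seg_ball: "closed_segment u v \<subseteq> ball 0 1" if "u \<in> ball 0 1" "v \<in> ball 0 1" for u v :: complex
    by (rule closed_segment_subset[OF that convB])
  have Asub: "a0 \<in> ball 0 1" using a0 A(2) by blast
  have hit: "\<exists>y. y \<in> frontier A \<and> y \<in> ball 0 1 \<and> winding_number \<Gamma> x' = winding_number \<Gamma> y"
    if x': "x' \<in> ball 0 1" "x' \<notin> A" for x'
  proof -
    obtain h where h: "path h" "pathstart h = x'" "path_image h \<subseteq> closed_segment x' a0"
      "path_image h \<inter> A = {}" "pathfinish h \<in> frontier A"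
      using first_hit[OF A(1) x'(2) a0] by blast
    have "path_image h \<subseteq> ball 0 1" using h(3) seg_ball[OF x'(1) Asub] by blast
    then have yb: "pathfinish h \<in> ball 0 1" using pathfinish_in_path_image by blast
    have "path_image h \<inter> path_image \<Gamma> = {}" using h(4) imG by blast
    then have "winding_number \<Gamma> constant_on path_image h"
      using winding_number_constant[OF pathG loopG connected_path_image[OF h(1)]] by blast
    then have "winding_number \<Gamma> (pathstart h) = winding_number \<Gamma> (pathfinish h)"
      unfolding constant_on_def using pathstart_in_path_image pathfinish_in_path_image by metis
    then show ?thesis using h(2) h(5) yb by blast
  qed
  obtain y0 where y0: "y0 \<in> frontier A" "y0 \<in> ball 0 1" using hit[OF x] by blast
  have sph: "sphere 0 1 \<subseteq> frontier A" "connected (sphere (0::complex) 1)" "sphere (0::complex) 1 \<noteq> {}"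
    using comp unfolding in_components_maximal by blast+
  have maxl: "D = sphere 0 1" if "sphere 0 1 \<subseteq> D" "D \<subseteq> frontier A" "connected D" for D
    using comp that sph(3) unfolding in_components_maximal by blast
  have y0s: "y0 \<notin> sphere 0 1" using y0(2) by simp
  have disj: "Lo \<inter> Li = {}"
  proof (rule ccontr)
    assume "Lo \<inter> Li \<noteq> {}"
    then have "connected (Lo \<union> Li)" using Lo_props(1) Li_props(1) by (rule connected_Un[rotated 2])
    moreover have "Lo \<union> Li = frontier A" using Lo_fr Li_fr cover by blast
    ultimately have "frontier A = sphere 0 1" using maxl sph(1) by blast
    then show False using y0 y0s by blast
  qed
  obtain P where P: "connected P" "P \<subseteq> frontier A" "frontier A \<inter> ball 0 1 \<subseteq> P"
  proof -
    have sub: "sphere 0 1 \<subseteq> Lo \<union> Li" using sph(1) cover by blast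
    have "sphere 0 1 \<subseteq> Lo \<or> sphere 0 1 \<subseteq> Li"
    proof (rule ccontr)
      assume "\<not> (sphere 0 1 \<subseteq> Lo \<or> sphere 0 1 \<subseteq> Li)"
      then have "Lo \<inter> sphere 0 1 \<noteq> {}" "Li \<inter> sphere 0 1 \<noteq> {}" using sub by blast+
      moreover have "Lo \<inter> Li \<inter> sphere 0 1 = {}" using disj by blast
      ultimately show False using sph(2) sub Lo_props(2) Li_props(2) unfolding connected_closed by blast
    qed
    then show ?thesis
    proof
      assume "sphere 0 1 \<subseteq> Lo"
      then have "Lo = sphere 0 1" using maxl Lo_fr Lo_props(1) by blast
      then have "frontier A \<inter> ball 0 1 \<subseteq> Li" using cover by auto
      then show ?thesis using that Li_props(1) Li_fr by blast
    next
      assume "sphere 0 1 \<subseteq> Li"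
      then have "Li = sphere 0 1" using maxl Li_fr Li_props(1) by blast
      then have "frontier A \<inter> ball 0 1 \<subseteq> Lo" using cover by auto
      then show ?thesis using that Lo_props(1) Lo_fr by blast
    qed
  qed
  have "P \<inter> path_image \<Gamma> = {}" using P(2) imG frA by blast
  then have "winding_number \<Gamma> constant_on P"
    using winding_number_constant[OF pathG loopG P(1)] by blast
  then obtain m where m: "\<And>p. p \<in> P \<Longrightarrow> winding_number \<Gamma> p = m" unfolding constant_on_def by blast
  have allm: "winding_number \<Gamma> x' = m" if xb: "x' \<in> ball 0 1" "x' \<notin> A" for x'
  proof -
    obtain y where y: "y \<in> frontier A" "y \<in> ball 0 1" "winding_number \<Gamma> x' = winding_number \<Gamma> y"
      using hit[OF xb] by blast
    then show ?thesis using m P(3) by blast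
  qed
  have "m \<noteq> 0"
  proof
    assume m0: "m = 0"
    have zero: "winding_number \<Gamma> w = 0" if "w \<notin> A" for w
    proof (cases "w \<in> ball 0 1")
      case True then show ?thesis using allm that m0 by blast
    next
      case False
      show ?thesis by (rule winding_number_zero_outside[OF pathG convB loopG False]) (use imG A(2) in blast)
    qed
    define f where "f w = deriv \<psi> w / \<psi> w" for w
    have psinz: "\<psi> w \<noteq> 0" if "w \<in> A" for w
    proof -
      have "\<psi> w \<in> ring 1 R" using im2 that by blast
      then show ?thesis by (auto simp: ring_def)
    qed
    have holf: "f holomorphic_on A" unfolding f_def
      by (intro holomorphic_intros holomorphic_deriv[OF hol2 A(1)] hol2 psinz)
    have "(f has_contour_integral 0) \<Gamma>"
      by (rule Cauchy_theorem_global[OF A(1) holf vpG loopG imG zero])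
    then have ci0: "contour_integral \<Gamma> f = 0" by (rule contour_integral_unique)
    have an: "\<psi> analytic_on A" using hol2 A(1) by (simp add: analytic_on_open)
    have "contour_integral (\<psi> \<circ> \<Gamma>) (\<lambda>w. 1 / (w - 0)) = contour_integral \<Gamma> (\<lambda>w. deriv \<psi> w * (1 / (\<psi> w - 0)))"
      by (rule contour_integral_comp_analyticW[OF an vpG imG])
    also have "(\<lambda>w. deriv \<psi> w * (1 / (\<psi> w - 0))) = f" by (simp add: f_def fun_eq_iff)
    finally have ci: "contour_integral (\<psi> \<circ> \<Gamma>) (\<lambda>w. 1 / (w - 0)) = 0" unfolding ci0 .
    have eqc: "\<psi> \<circ> \<Gamma> = circlepath 0 c"
    proof
      fix t
      have "norm (circlepath 0 c t) = c" using c by (simp add: circlepath norm_mult)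
      then have "circlepath 0 c t \<in> ring 1 R" using c by (simp add: ring_def)
      then show "(\<psi> \<circ> \<Gamma>) t = circlepath 0 c t" unfolding \<Gamma>_def o_def by (rule inv1)
    qed
    have w1: "winding_number (circlepath 0 c) 0 = 1"
      using c by (intro winding_number_circlepath_centre) simp
    have n0: "(0::complex) \<notin> path_image (circlepath 0 c)" using c by simp
    have wv: "winding_number (circlepath 0 c) 0 = 1/(2*pi*\<i>) * contour_integral (circlepath 0 c) (\<lambda>w. 1/(w - 0))"
      by (rule winding_number_valid_path[OF valid_path_circlepath n0])
    have "contour_integral (circlepath 0 c) (\<lambda>w. 1/(w - 0)) = 0" using ci unfolding eqc .
    then have "winding_number (circlepath 0 c) 0 = 0" using wv by simp
    then show False using w1 by simp
  qed
  then show ?thesis using allm[OF x] by (simp add: \<Gamma>_def)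
qed

lemma norm_cyl: "norm (exp (\<i> * (complex_of_real \<theta> + \<i> * complex_of_real t))) = exp (- t)"
  by (simp add: norm_exp_eq_Re algebra_simps)

lemma boundary0_sphere: "boundary0 = sphere 0 1"
proof
  show "boundary0 \<subseteq> sphere 0 1" by (auto simp: boundary0_def norm_exp_eq_Re)
  show "sphere 0 1 \<subseteq> boundary0"
  proof
    fix z :: complex assume "z \<in> sphere 0 1"
    then have z: "norm z = 1" by simp
    then have "z = sgn z" by (simp add: sgn_div_norm)
    also have "\<dots> = cis (Arg z)"
    proof -
      have "z \<noteq> 0" using z by auto
      then show ?thesis by (rule cis_Arg[symmetric])
    qed
    also have "\<dots> = exp (\<i> * complex_of_real (Arg z))" by (simp add: cis_conv_exp)
    finally show "z \<in> boundary0" unfolding boundary0_def by blast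
  qed
qed

theorem lemma4p1:
  fixes R :: real
  assumes "R > 1"
  shows "\<exists>a>0. \<forall>(l::ereal) (A::complex set).
           0 < l \<longrightarrow> A \<subseteq> cyl_Z l \<longrightarrow> is_annulus A \<longrightarrow>
           has_conformal_radius A R \<longrightarrow> adjacent A boundary0 \<longrightarrow>
           cyl_Z (ereal a) \<subseteq> A \<union> boundary0"
proof -
  have R: "R > 1" by (fact assms)
  define \<rho> where "\<rho> = rho0 R"
  have rho: "\<rho> < 1" "\<rho> > 0" using rho0_lt1[OF R] by (simp_all add: \<rho>_def)
  define a where "a = - ln ((1 + \<rho>) / 2)"
  have hpos: "(1 + \<rho>) / 2 > 0" "(1 + \<rho>) / 2 < 1" using rho by simp_all
  have apos: "a > 0" using hpos by (simp add: a_def)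
  have ea: "exp (- a) = (1 + \<rho>) / 2" using hpos by (simp add: a_def)
  define c where "c = exp (ln R / 2)"
  have c: "1 < c" "c < R"
  proof -
    have h: "0 < ln R / 2" "ln R / 2 < ln R" using R by simp_all
    have "exp 0 < exp (ln R / 2)" using h(1) by (simp only: exp_less_cancel_iff)
    then show "1 < c" by (simp add: c_def)
    have "exp (ln R / 2) < exp (ln R)" using h(2) by (simp only: exp_less_cancel_iff)
    then show "c < R" using R by (simp add: c_def)
  qed
  show ?thesis
  proof (intro exI[of _ a] conjI allI impI)
    show "a > 0" by (fact apos)
    fix l :: ereal and A :: "complex set"
    assume l: "0 < l" and sub: "A \<subseteq> cyl_Z l" and ann: "is_annulus A"
      and cr: "has_conformal_radius A R" and adj: "adjacent A boundary0"
    have Aopen: "open A" using ann by (simp add: is_annulus_def)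
    have "biholomorphic A (ring 1 R)" using cr by (simp add: has_conformal_radius_def)
    then obtain \<psi> \<phi> where hol2: "\<psi> holomorphic_on A" and hol1: "\<phi> holomorphic_on ring 1 R"
      and im2: "\<psi> ` A = ring 1 R" and im1: "\<phi> ` ring 1 R = A"
      and inv2: "\<forall>z\<in>A. \<phi> (\<psi> z) = z" and inv1: "\<forall>w\<in>ring 1 R. \<psi> (\<phi> w) = w"
      unfolding biholomorphic_def by metis
    have cylnorm: "0 < norm x \<and> norm x \<le> 1" if "x \<in> A" for x
    proof -
      have "x \<in> cyl_Z l" using that sub by (rule subsetD[rotated])
      then obtain \<theta> t where "x = exp (\<i> * (complex_of_real \<theta> + \<i> * complex_of_real t))" "0 \<le> t"
        unfolding cyl_Z_def by blast
      then show ?thesis using norm_cyl by simp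
    qed
    have "A \<subseteq> cball 0 1"
    proof
      fix x assume "x \<in> A" then show "x \<in> cball 0 1" using cylnorm by simp
    qed
    then have "A \<subseteq> interior (cball 0 1)" by (rule interior_maximal[OF _ Aopen])
    then have Aball: "A \<subseteq> ball 0 1" by simp
    have A0: "0 \<notin> A" using cylnorm by force
    have comp: "sphere 0 1 \<in> components (frontier A)"
      using adj by (simp add: adjacent_def boundary0_sphere)
    have topo: "winding_number (\<phi> \<circ> circlepath 0 c) x \<noteq> 0" if "x \<in> ball 0 1" "x \<notin> A" for x
      by (rule topo_part[OF R c Aopen Aball hol1 hol2 im1 im2 _ comp that]) (use inv1 in blast)
    have wn0: "winding_number (\<phi> \<circ> circlepath 0 (exp (ln R / 2))) 0 \<noteq> 0"
      using topo[of 0] A0 by (simp add: c_def)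
    have nz: "\<phi> z \<noteq> 0 \<and> norm (\<phi> z) < 1" if "z \<in> ring 1 R" for z
    proof -
      have "\<phi> z \<in> A" using im1 that by blast
      then show ?thesis using A0 Aball by auto
    qed
    have core: "norm (\<phi> z) \<le> \<rho>" if zc: "norm z = c" for z
    proof -
      have "norm z = exp (ln R / 2)" using zc by (simp add: c_def)
      note cb = core_bound[OF R hol1 nz wn0 this]
      then show ?thesis unfolding \<rho>_def .
    qed
    have pimg: "path_image (\<phi> \<circ> circlepath 0 c) \<subseteq> cball 0 \<rho>"
    proof -
      have "path_image (\<phi> \<circ> circlepath 0 c) = \<phi> ` sphere 0 c" using c by (simp add: path_image_compose)
      then show ?thesis using core by auto
    qed
    have cimg: "path_image (circlepath 0 c) \<subseteq> ring 1 R" using c by (auto simp: ring_def)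
    have pathG: "path (\<phi> \<circ> circlepath 0 c)"
      by (rule path_continuous_image[OF path_circlepath continuous_on_subset[OF holomorphic_on_imp_continuous_on[OF hol1] cimg]])
    have loopG: "pathfinish (\<phi> \<circ> circlepath 0 c) = pathstart (\<phi> \<circ> circlepath 0 c)"
      by (simp add: pathfinish_def pathstart_def circlepath)
    show "cyl_Z (ereal a) \<subseteq> A \<union> boundary0"
    proof
      fix x assume "x \<in> cyl_Z (ereal a)"
      then obtain \<theta> t where x: "x = exp (\<i> * (complex_of_real \<theta> + \<i> * complex_of_real t))"
        and t: "0 \<le> t" "t \<le> a" by (auto simp: cyl_Z_def)
      show "x \<in> A \<union> boundary0"
      proof (cases "t = 0")
        case True
        then have "x = exp (\<i> * complex_of_real \<theta>)" using x by simp
        then show ?thesis unfolding boundary0_def by blast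
      next
        case False
        then have tp: "t > 0" using t by simp
        have nx: "norm x = exp (- t)" using x norm_cyl by simp
        have "norm x < 1" using nx tp by simp
        then have xb: "x \<in> ball 0 1" by simp
        have "exp (- a) \<le> exp (- t)" using t by simp
        then have "norm x > \<rho>" using nx ea rho by simp
        then have xc: "x \<notin> cball 0 \<rho>" by simp
        show ?thesis
        proof (rule ccontr)
          assume "x \<notin> A \<union> boundary0"
          then have "x \<notin> A" by simp
          then have "winding_number (\<phi> \<circ> circlepath 0 c) x \<noteq> 0" using topo xb by blast
          moreover have "winding_number (\<phi> \<circ> circlepath 0 c) x = 0"
            by (rule winding_number_zero_outside[OF pathG convex_cball loopG xc pimg])
          ultimately show False by simp
        qed
      qed
    qed
  qed
qed


end
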